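(* For integers $N\ge 0$ and $i\ge 0$, the number of reversed partial ternary paths of length $3N+2i$ ending at level $i$ equals $$\sum_{0\le k\le i/2}\binom{i-k}{k}\left[\binom{3N+2i+1}{N+k}-3\binom{3N+2i}{N+k-1}\right],$$ with the convention $\binom{a}{b}=0$ for $b<0$.
   Context: A reversed partial ternary path of length $n$ is a lattice path $(0,c_0),\dots,(n,c_n)$ with $c_0=0$, each step being either $(1,2)$ or $(1,-1)$, never going below the $x$-axis; it ends at level $c_n$. Equivalently, these are final segments of ternary paths (steps $(1,1)$ and $(1,-2)$, staying weakly above the $x$-axis, ending on the $x$-axis) read from right to left. *)

theory Defs
  imports Main
begin

text \<open>A step is encoded as a boolean: True = step (1,2), False = step (1,-1).\<close>

definition step_val :: "bool \<Rightarrow> int" where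
  "step_val s = (if s then 2 else -1)"

definition level :: "bool list \<Rightarrow> int" where
  "level ss = (\<Sum>s\<leftarrow>ss. step_val s)"

definition rev_partial_ternary :: "bool list \<Rightarrow> bool" where
  "rev_partial_ternary ss = (\<forall>j \<le> length ss. level (take j ss) \<ge> 0)"

definition rpt_paths :: "nat \<Rightarrow> int \<Rightarrow> bool list set" where
  "rpt_paths n c = {ss. length ss = n \<and> rev_partial_ternary ss \<and> level ss = c}"

definition binom :: "nat \<Rightarrow> int \<Rightarrow> int" where
  "binom a b = (if b < 0 then 0 else int (a choose nat b))"

end

theory Submission
  imports Defs
begin

fun B :: "nat \<Rightarrow> int \<Rightarrow> int" where
  "B 0 h = (if h = 0 then 1 else 0)"
| "B (Suc n) h = (if h < 0 then 0 else B n (h-1) + B n (h+2))"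

lemma B_neg: "h < 0 \<Longrightarrow> B n h = 0"
  by (cases n) auto

lemma B_Suc: "h \<ge> 0 \<Longrightarrow> B (Suc n) h = B n (h-1) + B n (h+2)"
  by simp

lemma binom_Suc: "binom (Suc n) d = binom n d + binom n (d-1)"
proof (cases "d < 0")
  case True then show ?thesis by (simp add: binom_def)
next
  case False
  show ?thesis
  proof (cases "d = 0")
    case True then show ?thesis by (simp add: binom_def)
  next
    case False
    with \<open>\<not> d < 0\<close> have "nat d = Suc (nat (d-1))" by simp
    then show ?thesis using False \<open>\<not> d < 0\<close> by (simp add: binom_def)
  qed
qed

lemma zero_lemma:
  assumes "int n + 1 = 3*d"
  shows "binom n d - 2 * binom n (d-1) = 0"
proof -
  have "d \<ge> 1" using assms by linarith
  define e where "e = nat d - 1"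
  have d: "d = int e + 1" using \<open>d \<ge> 1\<close> e_def by simp
  have n: "n = 3*e+2" using assms d by linarith
  have "Suc e * (n choose Suc e) = n * ((n - 1) choose e)" by (rule binomial_absorption)
  also have "\<dots> = (n - e) * (n choose e)" by (rule binomial_absorb_comp[symmetric])
  also have "n - e = 2 * Suc e" using n by simp
  finally have "Suc e * (n choose Suc e) = Suc e * (2 * (n choose e))" by simp
  then have "n choose Suc e = 2 * (n choose e)" by (metis mult_left_cancel nat.distinct(1))
  moreover have "nat d = Suc e" "nat (d-1) = e" using d by auto
  ultimately show ?thesis using d by (simp add: binom_def)
qed

lemma B_closed:
  "h \<ge> 0 \<Longrightarrow> int n = h + 3*d \<Longrightarrow> B n h = binom n d - 2*binom n (d-1)"
proof (induction n arbitrary: h d)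
  case 0
  then show ?case
  proof (cases "h = 0")
    case True then have "d = 0" using 0 by simp
    then show ?thesis using True by (simp add: binom_def)
  next
    case False then have "d < 0" using 0 by simp
    then show ?thesis using False by (simp add: binom_def)
  qed
next
  case (Suc n)
  have h2: "B n (h+2) = binom n (d-1) - 2*binom n (d-1-1)"
    using Suc by (intro Suc.IH) auto
  have h1: "B n (h-1) = binom n d - 2*binom n (d-1)"
  proof (cases "h = 0")
    case True
    then have "B n (h-1) = 0" by (simp add: B_neg)
    moreover have "binom n d - 2 * binom n (d-1) = 0"
      using Suc.prems True by (intro zero_lemma) simp
    ultimately show ?thesis by simp
  next
    case False
    then show ?thesis using Suc by (intro Suc.IH) auto
  qed
  show ?case using Suc.prems h1 h2 binom_Suc[of n d] binom_Suc[of n "d-1"]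
    by simp
qed

fun G :: "nat \<Rightarrow> nat \<Rightarrow> int \<Rightarrow> int" where
  "G n 0 s = B n s"
| "G n (Suc 0) s = B n (2+s)"
| "G n (Suc (Suc c)) s = G n (Suc c) (s+2) + G n c (s+1)"

lemma G_step: "s \<ge> 0 \<Longrightarrow> G (Suc n) c s = G n c (s-1) + G n c (s+2)"
proof (induction n c s rule: G.induct)
  case (1 n s) then show ?case by (simp del: B.simps add: B_Suc)
next
  case (2 n s) then show ?case by (simp del: B.simps add: B_Suc algebra_simps)
next
  case (3 n c s)
  have a0: "G (Suc n) (Suc c) (s+2) = G n (Suc c) (s+2-1) + G n (Suc c) (s+2+2)"
    using 3 by (intro 3(1)) simp
  have a1: "s+2-1 = s+1" "s+2+2 = s+4" by simp_all
  have a: "G (Suc n) (Suc c) (s+2) = G n (Suc c) (s+1) + G n (Suc c) (s+4)"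
    using a0 unfolding a1 .
  have b0: "G (Suc n) c (s+1) = G n c (s+1-1) + G n c (s+1+2)"
    using 3 by (intro 3(2)) simp
  have b1: "s+1-1 = s" "s+1+2 = s+3" by simp_all
  have b: "G (Suc n) c (s+1) = G n c s + G n c (s+3)"
    using b0 unfolding b1 .
  have c: "G n (Suc (Suc c)) (s-1) = G n (Suc c) (s+1) + G n c s" by (simp add: add.commute)
  have d: "G n (Suc (Suc c)) (s+2) = G n (Suc c) (s+4) + G n c (s+3)"
    by (simp add: add.commute add.left_commute)
  have e: "G (Suc n) (Suc (Suc c)) s = G (Suc n) (Suc c) (s+2) + G (Suc n) c (s+1)" by simp
  show ?case using a b c d e by linarith
qed

lemma G_rel:
  "G (Suc n) c 0 = G n (Suc c) 0 + (if c \<ge> 2 then G n (c-2) 0 else 0)"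
proof -
  have "G (Suc n) c 0 = G n c (-1) + G n c 2" using G_step[of 0 n c] by simp
  moreover have "G n (Suc c) 0 = G n c 2 + (if c = 0 then 0 else G n (c-1) 1)"
    by (cases c) auto
  moreover have "G n c (-1) = (if c = 0 then 0 else G n (c-1) 1) + (if c \<ge> 2 then G n (c-2) 0 else 0)"
  proof (cases c)
    case 0 then show ?thesis by (simp add: B_neg)
  next
    case (Suc c') then show ?thesis by (cases c') auto
  qed
  ultimately show ?thesis by simp
qed

lemma fib_sum:
  fixes X :: "nat \<Rightarrow> int"
  shows "(\<Sum>k\<le>Suc (Suc c). int ((Suc (Suc c) - k) choose k) * X k) =
     (\<Sum>k\<le>Suc c. int ((Suc c - k) choose k) * X k) + (\<Sum>k\<le>c. int ((c - k) choose k) * X (Suc k))"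
proof -
  define f where "f k = (if k = 0 then 0 else int ((Suc c - k) choose (k - 1)) * X k)" for k
  have s1: "(\<Sum>k\<le>Suc c. int ((Suc c - k) choose k) * X k) =
        (\<Sum>k\<le>Suc (Suc c). int ((Suc c - k) choose k) * X k)"
    by simp
  have "(\<Sum>k\<le>Suc (Suc c). f k) = f 0 + (\<Sum>k\<le>Suc c. f (Suc k))"
    by (rule sum.atMost_Suc_shift)
  also have "\<dots> = (\<Sum>k\<le>Suc c. int ((c - k) choose k) * X (Suc k))"
    by (simp add: f_def)
  also have "\<dots> = (\<Sum>k\<le>c. int ((c - k) choose k) * X (Suc k))"
    by simp
  finally have s2: "(\<Sum>k\<le>Suc (Suc c). f k) = (\<Sum>k\<le>c. int ((c - k) choose k) * X (Suc k))" .
  have pas: "int ((Suc (Suc c) - k) choose k) * X k = int ((Suc c - k) choose k) * X k + f k" for k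
  proof (cases k)
    case 0 then show ?thesis by (simp add: f_def)
  next
    case (Suc j)
    have "(Suc c - j) choose (Suc j) = ((c - j) choose (Suc j)) + ((c - j) choose j)"
    proof (cases "j \<le> c")
      case True
      then have "Suc c - j = Suc (c - j)" by simp
      then show ?thesis by simp
    next
      case False then show ?thesis by simp
    qed
    then show ?thesis using Suc by (simp add: f_def algebra_simps)
  qed
  have "(\<Sum>k\<le>Suc (Suc c). int ((Suc (Suc c) - k) choose k) * X k) =
     (\<Sum>k\<le>Suc (Suc c). int ((Suc c - k) choose k) * X k) + (\<Sum>k\<le>Suc (Suc c). f k)"
    by (simp only: pas sum.distrib)
  then show ?thesis using s1 s2 by simp
qed

lemma G_sum_full:
  "G n c s = (\<Sum>k\<le>c. int ((c - k) choose k) * B n (2 * int c - 3 * int k + s))"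
proof (induction n c s rule: G.induct)
  case (1 n s) then show ?case by simp
next
  case (2 n s) then show ?case by (simp add: algebra_simps)
next
  case (3 n c s)
  let ?X = "\<lambda>k. B n (2 * int (Suc (Suc c)) - 3 * int k + s)"
  have a: "G n (Suc c) (s+2) = (\<Sum>k\<le>Suc c. int ((Suc c - k) choose k) * ?X k)"
    using 3(1) by (simp add: algebra_simps)
  have b: "G n c (s+1) = (\<Sum>k\<le>c. int ((c - k) choose k) * ?X (Suc k))"
    using 3(2) by (simp add: algebra_simps)
  show ?case using a b fib_sum[of c ?X] by simp
qed

lemma G_sum:
  "G n c s = (\<Sum>k\<in>{0..c div 2}. int ((c - k) choose k) * B n (2 * int c - 3 * int k + s))"
proof -
  have "(\<Sum>k\<le>c. int ((c - k) choose k) * B n (2 * int c - 3 * int k + s)) =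
        (\<Sum>k\<in>{0..c div 2}. int ((c - k) choose k) * B n (2 * int c - 3 * int k + s))"
  proof (rule sum.mono_neutral_right)
    show "finite {..c}" by simp
    show "{0..c div 2} \<subseteq> {..c}" by auto
    show "\<forall>i\<in>{..c} - {0..c div 2}. int ((c - i) choose i) * B n (2 * int c - 3 * int i + s) = 0"
    proof
      fix i assume "i \<in> {..c} - {0..c div 2}"
      then have "c - i < i" by auto
      then show "int ((c - i) choose i) * B n (2 * int c - 3 * int i + s) = 0" by simp
    qed
  qed
  then show ?thesis using G_sum_full by simp
qed

lemma level_snoc: "level (ss @ [x]) = level ss + step_val x"
  by (simp add: level_def)

lemma rpt_snoc:
  "rev_partial_ternary (ss @ [x]) = (rev_partial_ternary ss \<and> level (ss @ [x]) \<ge> 0)"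
  unfolding rev_partial_ternary_def
  by (auto simp: le_Suc_eq)

lemma rpt_neg: "c < 0 \<Longrightarrow> rpt_paths n c = {}"
  unfolding rpt_paths_def rev_partial_ternary_def
  by auto

lemma rpt_0: "rpt_paths 0 c = (if c = 0 then {[]} else {})"
  unfolding rpt_paths_def rev_partial_ternary_def by (auto simp: level_def)

lemma rpt_fin: "finite (rpt_paths n c)"
proof -
  have "rpt_paths n c \<subseteq> {xs. set xs \<subseteq> (UNIV::bool set) \<and> length xs = n}"
    unfolding rpt_paths_def by auto
  moreover have "finite {xs. set xs \<subseteq> (UNIV::bool set) \<and> length xs = n}"
    by (rule finite_lists_length_eq) simp
  ultimately show ?thesis by (rule finite_subset)
qed

lemma rpt_Suc:
  assumes "c \<ge> 0"
  shows "rpt_paths (Suc n) c = (\<lambda>ss. ss @ [True]) ` rpt_paths n (c-2) \<union> (\<lambda>ss. ss @ [False]) ` rpt_paths n (c+1)"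
proof
  show "rpt_paths (Suc n) c \<subseteq> (\<lambda>ss. ss @ [True]) ` rpt_paths n (c-2) \<union> (\<lambda>ss. ss @ [False]) ` rpt_paths n (c+1)"
  proof
    fix ss assume H: "ss \<in> rpt_paths (Suc n) c"
    then have "ss \<noteq> []" unfolding rpt_paths_def by auto
    then obtain ys x where ss: "ss = ys @ [x]" by (metis rev_exhaust)
    have "length ys = n" "rev_partial_ternary ys" "level ys + step_val x = c"
      using H unfolding ss rpt_paths_def by (auto simp: rpt_snoc level_snoc)
    then show "ss \<in> (\<lambda>ss. ss @ [True]) ` rpt_paths n (c-2) \<union> (\<lambda>ss. ss @ [False]) ` rpt_paths n (c+1)"
      unfolding ss rpt_paths_def by (cases x) (auto simp: step_val_def)
  qed
next
  show "(\<lambda>ss. ss @ [True]) ` rpt_paths n (c-2) \<union> (\<lambda>ss. ss @ [False]) ` rpt_paths n (c+1) \<subseteq> rpt_paths (Suc n) c"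
    using assms unfolding rpt_paths_def by (auto simp: rpt_snoc level_snoc step_val_def)
qed

lemma card_Suc:
  assumes "c \<ge> 0"
  shows "card (rpt_paths (Suc n) c) = card (rpt_paths n (c-2)) + card (rpt_paths n (c+1))"
proof -
  have "card (rpt_paths (Suc n) c) = card ((\<lambda>ss. ss @ [True]) ` rpt_paths n (c-2)) + card ((\<lambda>ss. ss @ [False]) ` rpt_paths n (c+1))"
    unfolding rpt_Suc[OF assms] by (rule card_Un_disjoint) (auto simp: rpt_fin)
  moreover have "card ((\<lambda>ss. ss @ [True]) ` rpt_paths n (c-2)) = card (rpt_paths n (c-2))"
    by (rule card_image) (simp add: inj_on_def)
  moreover have "card ((\<lambda>ss. ss @ [False]) ` rpt_paths n (c+1)) = card (rpt_paths n (c+1))"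
    by (rule card_image) (simp add: inj_on_def)
  ultimately show ?thesis by simp
qed

lemma F_G: "int (card (rpt_paths n (int c))) = G n c 0"
proof (induction n arbitrary: c)
  case 0
  show ?case
  proof (cases "c = 0")
    case True then show ?thesis by (simp add: rpt_0)
  next
    case False
    have "G 0 c 0 = 0" unfolding G_sum
    proof (rule sum.neutral, rule ballI)
      fix k assume "k \<in> {0..c div 2}"
      then have "2 * int c - 3 * int k + 0 \<noteq> 0" using False by auto
      then show "int ((c - k) choose k) * B 0 (2 * int c - 3 * int k + 0) = 0" by simp
    qed
    then show ?thesis using False by (simp add: rpt_0)
  qed
next
  case (Suc n)
  have "int (card (rpt_paths (Suc n) (int c))) = int (card (rpt_paths n (int c - 2))) + int (card (rpt_paths n (int (Suc c))))"
    using card_Suc[of "int c" n] by (simp add: add.commute)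
  also have "int (card (rpt_paths n (int (Suc c)))) = G n (Suc c) 0" by (rule Suc.IH)
  also have "int (card (rpt_paths n (int c - 2))) = (if c \<ge> 2 then G n (c-2) 0 else 0)"
  proof (cases "c \<ge> 2")
    case True
    then have "int c - 2 = int (c - 2)" by simp
    then show ?thesis using True Suc.IH[of "c-2"] by simp
  next
    case False then show ?thesis by (simp add: rpt_neg)
  qed
  finally show ?case using G_rel[of n c] by simp
qed

theorem mainTheorem2:
  fixes N i :: nat
  shows "int (card (rpt_paths (3*N + 2*i) (int i))) =
    (\<Sum>k\<in>{0..i div 2}.
       int ((i - k) choose k) *
       (binom (3*N + 2*i + 1) (int N + int k) - 3 * binom (3*N + 2*i) (int N + int k - 1)))"
proof -
  let ?n = "3*N + 2*i"
  have "int (card (rpt_paths ?n (int i))) = G ?n i 0" by (rule F_G)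
  also have "\<dots> = (\<Sum>k\<in>{0..i div 2}. int ((i - k) choose k) * B ?n (2 * int i - 3 * int k + 0))"
    by (rule G_sum)
  also have "\<dots> = (\<Sum>k\<in>{0..i div 2}.
       int ((i - k) choose k) *
       (binom (3*N + 2*i + 1) (int N + int k) - 3 * binom (3*N + 2*i) (int N + int k - 1)))"
  proof (rule sum.cong[OF refl])
    fix k assume "k \<in> {0..i div 2}"
    then have hk: "2 * int i - 3 * int k \<ge> 0" by auto
    have "B ?n (2 * int i - 3 * int k) = binom ?n (int N + int k) - 2 * binom ?n (int N + int k - 1)"
      using hk by (intro B_closed) auto
    moreover have "binom (3*N + 2*i + 1) (int N + int k) = binom ?n (int N + int k) + binom ?n (int N + int k - 1)"
      using binom_Suc[of ?n "int N + int k"] by simp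
    ultimately show "int ((i - k) choose k) * B ?n (2 * int i - 3 * int k + 0) =
       int ((i - k) choose k) *
       (binom (3*N + 2*i + 1) (int N + int k) - 3 * binom (3*N + 2*i) (int N + int k - 1))"
      by simp
  qed
  finally show ?thesis .
qed

end
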